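(* Let $1<p_1,\ldots,p_m<\infty$ and $f\in\mathbb{R}^{d_1\times\cdots\times d_m}$. If $f\ne0$, then $\mathfrak G(f)\ne\emptyset$ and every $\lambda\in\mathfrak G(f)$ satisfies $$0<\lambda\le\min_{i\in[m]}\max_{l_i\in[d_i]}d_i^{1/p_i'}\,\partial_{i,l_i}\tilde f(\mathbf e),$$ where $\mathbf e=(1,1,\ldots,1)\in\mathcal R^d$ and $\tilde f=|f|$ is the tensor with entries $|f_{j_1,\ldots,j_m}|$.
   Context: $f$ is identified with the multilinear form $f(\mathbf x_1,\ldots,\mathbf x_m)=\sum_{j_1,\ldots,j_m}f_{j_1,\ldots,j_m}x_{1,j_1}\cdots x_{m,j_m}$ on $\mathcal R^d=\mathbb{R}^{d_1}\times\cdots\times\mathbb{R}^{d_m}$; $\partial_{i,l}=\partial/\partial x_{i,l}$, $\nabla_if(\mathbf x)\in\mathbb{R}^{d_i}$ the vector of $\partial_{i,l}f(\mathbf x)$. $p'=p/(p-1)$; $\psi_q(\mathbf y)_j=|y_j|^{q-1}\mathrm{sign}(y_j)$. $\mathcal S^d=\{\mathbf x\in\mathcal R^d:\|\mathbf x_k\|_{p_k}=1\ \forall k\}$. $\sigma_i(\mathbf x)=\mathrm{sign}(f(\mathbf x))\,\psi_{p_i'}(\nabla_if(\mathbf x))$. $\mathfrak G(f)=\{\lambda\in\mathbb{R}\setminus\{0\}:\exists\mathbf x\in\mathcal S^d\text{ with }\sigma_i(\mathbf x)=\lambda^{p_i'-1}\mathbf x_i\ \forall i\in[m]\}$ (the set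 of critical values of $Q(\mathbf x)=|f(\mathbf x)|/\prod_k\|\mathbf x_k\|_{p_k}$). *)

theory Defs
  imports "HOL-Analysis.Analysis"
begin

text \<open>Order-m tensors with dimensions d 0, ..., d (m-1) (0-based indices).
  A multi-index is a function j in PiE {..<m} (\<lambda>i. {..<d i}); a tensor is a function
  f from multi-indices to reals (values outside the index set are irrelevant).
  A point of R^d = R^{d_1} x ... x R^{d_m} is x :: nat => nat => real, with
  component x i l for i < m, l < d i.\<close>

definition tidx :: "nat \<Rightarrow> (nat \<Rightarrow> nat) \<Rightarrow> (nat \<Rightarrow> nat) set" where
  "tidx m d = PiE {..<m} (\<lambda>i. {..<d i})"

definition mlf :: "nat \<Rightarrow> (nat \<Rightarrow> nat) \<Rightarrow> ((nat \<Rightarrow> nat) \<Rightarrow> real) \<Rightarrow> (nat \<Rightarrow> nat \<Rightarrow> real) \<Rightarrow> real" where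
  "mlf m d f x = (\<Sum>j\<in>tidx m d. f j * (\<Prod>i<m. x i (j i)))"

definition pder :: "nat \<Rightarrow> (nat \<Rightarrow> nat) \<Rightarrow> ((nat \<Rightarrow> nat) \<Rightarrow> real) \<Rightarrow> nat \<Rightarrow> nat \<Rightarrow> (nat \<Rightarrow> nat \<Rightarrow> real) \<Rightarrow> real" where
  "pder m d f i l x = deriv (\<lambda>t. mlf m d f (x(i := (x i)(l := t)))) (x i l)"

definition conj_exp :: "real \<Rightarrow> real" where
  "conj_exp p = p / (p - 1)"

definition psi :: "real \<Rightarrow> real \<Rightarrow> real" where
  "psi q y = \<bar>y\<bar> powr (q - 1) * sgn y"

definition pnorm :: "real \<Rightarrow> nat \<Rightarrow> (nat \<Rightarrow> real) \<Rightarrow> real" where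
  "pnorm p n y = (\<Sum>l<n. \<bar>y l\<bar> powr p) powr (1 / p)"

definition sphere_set :: "nat \<Rightarrow> (nat \<Rightarrow> nat) \<Rightarrow> (nat \<Rightarrow> real) \<Rightarrow> (nat \<Rightarrow> nat \<Rightarrow> real) set" where
  "sphere_set m d p = {x. \<forall>k<m. pnorm (p k) (d k) (x k) = 1}"

definition sigma :: "nat \<Rightarrow> (nat \<Rightarrow> nat) \<Rightarrow> (nat \<Rightarrow> real) \<Rightarrow> ((nat \<Rightarrow> nat) \<Rightarrow> real) \<Rightarrow> nat \<Rightarrow> (nat \<Rightarrow> nat \<Rightarrow> real) \<Rightarrow> nat \<Rightarrow> real" where
  "sigma m d p f i x l = sgn (mlf m d f x) * psi (conj_exp (p i)) (pder m d f i l x)"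

text \<open>The set of critical values G(f). The power lambda^(p_i'-1) is read as the
  odd (signed) power psi_{p_i'}(lambda) = |lambda|^(p_i'-1) sign lambda, which agrees
  with the usual power for lambda > 0.\<close>
definition crit_vals :: "nat \<Rightarrow> (nat \<Rightarrow> nat) \<Rightarrow> (nat \<Rightarrow> real) \<Rightarrow> ((nat \<Rightarrow> nat) \<Rightarrow> real) \<Rightarrow> real set" where
  "crit_vals m d p f = {lam. lam \<noteq> 0 \<and> (\<exists>x\<in>sphere_set m d p.
      \<forall>i<m. \<forall>l<d i. sigma m d p f i x l = psi (conj_exp (p i)) lam * x i l)}"

end

theory Submission
  imports Defs
begin


lemma conj_exp_facts:
  assumes "1 < (p::real)"
  shows "(p - 1) * (conj_exp p - 1) = 1" "1 < conj_exp p" "1/p + 1/conj_exp p = 1"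
    "1 / conj_exp p = 1 - 1/p"
  using assms by (auto simp: conj_exp_def field_simps)

lemma psi_mult: "psi q (a * b) = psi q a * psi q b"
  by (simp add: psi_def abs_mult powr_mult sgn_mult)

lemma psi_inv:
  assumes "(p - 1) * (q - 1) = 1"
  shows "psi q (psi p a) = a"
proof (cases "a = 0")
  case True thus ?thesis by (simp add: psi_def)
next
  case False
  hence pos: "\<bar>a\<bar> powr (p - 1) > 0" by simp
  have "psi p a = (if a > 0 then \<bar>a\<bar> powr (p-1) else - (\<bar>a\<bar> powr (p-1)))"
    using False by (auto simp: psi_def sgn_if)
  hence "psi q (psi p a) = (\<bar>a\<bar> powr (p - 1)) powr (q - 1) * sgn a"
    using pos False by (auto simp: psi_def sgn_if)
  also have "\<dots> = \<bar>a\<bar> * sgn a" using assms by (simp add: powr_powr)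
  finally show ?thesis by (simp add: abs_mult_sgn)
qed

lemma psi_sgn: "psi q (sgn x) = sgn x"
  by (simp add: psi_def sgn_if)

lemma mult_psi: assumes "0 < p" shows "x * psi p x = \<bar>x\<bar> powr p"
proof (cases "x = 0")
  case True thus ?thesis using assms by (simp add: psi_def)
next
  case False
  have "x * psi p x = \<bar>x\<bar> * \<bar>x\<bar> powr (p - 1)"
    by (simp add: psi_def sgn_if abs_if)
  also have "\<dots> = \<bar>x\<bar> powr 1 * \<bar>x\<bar> powr (p - 1)" using False by simp
  also have "\<dots> = \<bar>x\<bar> powr p" by (simp only: powr_add[symmetric]) simp
  finally show ?thesis .
qed

definition coef :: "nat \<Rightarrow> (nat \<Rightarrow> nat) \<Rightarrow> ((nat \<Rightarrow> nat) \<Rightarrow> real) \<Rightarrow> (nat \<Rightarrow> nat \<Rightarrow> real) \<Rightarrow> nat \<Rightarrow> nat \<Rightarrow> real" where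
  "coef m d f x i k = (\<Sum>j\<in>{j\<in>tidx m d. j i = k}. f j * (\<Prod>i'\<in>{..<m}-{i}. x i' (j i')))"

lemma finite_tidx: "finite (tidx m d)"
  by (simp add: tidx_def finite_PiE)

lemma coef_upd: "coef m d f (x(i := v)) i k = coef m d f x i k"
  unfolding coef_def by (intro sum.cong refl arg_cong2[where f="(*)"] prod.cong) auto

lemma mlf_upd:
  assumes "i < m"
  shows "mlf m d f (x(i := v)) = (\<Sum>k<d i. v k * coef m d f x i k)"
proof -
  have "mlf m d f (x(i := v)) = (\<Sum>j\<in>tidx m d. v (j i) * (f j * (\<Prod>i'\<in>{..<m}-{i}. x i' (j i'))))"
    unfolding mlf_def
  proof (rule sum.cong[OF refl])
    fix j
    have "(\<Prod>i'<m. (x(i := v)) i' (j i')) = (x(i := v)) i (j i) * (\<Prod>i'\<in>{..<m}-{i}. (x(i := v)) i' (j i'))"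
      using assms by (subst prod.remove[of _ i]) auto
    also have "(\<Prod>i'\<in>{..<m}-{i}. (x(i := v)) i' (j i')) = (\<Prod>i'\<in>{..<m}-{i}. x i' (j i'))"
      by (intro prod.cong) auto
    finally show "f j * (\<Prod>i'<m. (x(i := v)) i' (j i')) = v (j i) * (f j * (\<Prod>i'\<in>{..<m}-{i}. x i' (j i')))"
      by simp
  qed
  also have "\<dots> = (\<Sum>k<d i. \<Sum>j\<in>{j\<in>tidx m d. j i = k}. v (j i) * (f j * (\<Prod>i'\<in>{..<m}-{i}. x i' (j i'))))"
    by (rule sum.group[symmetric]) (use assms in \<open>auto simp: finite_tidx tidx_def finite_PiE\<close>)
  also have "\<dots> = (\<Sum>k<d i. v k * coef m d f x i k)"
    unfolding coef_def sum_distrib_left by (intro sum.cong refl) auto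
  finally show ?thesis .
qed

lemma mlf_self:
  assumes "i < m"
  shows "mlf m d f x = (\<Sum>k<d i. x i k * coef m d f x i k)"
  using mlf_upd[OF assms, of d f x "x i"] by simp

lemma pder_coef:
  assumes "i < m" "l < d i"
  shows "pder m d f i l x = coef m d f x i l"
proof -
  define A where "A = (\<Sum>k\<in>{..<d i}-{l}. x i k * coef m d f x i k)"
  have eq: "mlf m d f (x(i := (x i)(l := t))) = A + t * coef m d f x i l" for t
  proof -
    have "mlf m d f (x(i := (x i)(l := t))) = (\<Sum>k<d i. ((x i)(l := t)) k * coef m d f x i k)"
      by (simp add: mlf_upd[OF assms(1)])
    also have "\<dots> = t * coef m d f x i l + (\<Sum>k\<in>{..<d i}-{l}. ((x i)(l := t)) k * coef m d f x i k)"
      using assms by (subst sum.remove[of _ l]) auto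
    also have "(\<Sum>k\<in>{..<d i}-{l}. ((x i)(l := t)) k * coef m d f x i k) = A"
      unfolding A_def by (intro sum.cong) auto
    finally show ?thesis by (simp only: add.commute)
  qed
  have "((\<lambda>t. A + t * coef m d f x i l) has_real_derivative coef m d f x i l) (at (x i l))"
    by (auto intro!: derivative_eq_intros)
  thus ?thesis unfolding pder_def eq by (rule DERIV_imp_deriv)
qed




lemma row_le1:
  fixes n :: nat
  assumes "(\<Sum>l<n. \<bar>y l\<bar> powr p) = 1" "l < n" "0 < (p::real)"
  shows "\<bar>y l\<bar> \<le> 1"
proof (rule ccontr)
  assume "\<not> ?thesis"
  hence "1 < \<bar>y l\<bar> powr p" using assms(3) by (intro gr_one_powr) auto
  moreover have "\<bar>y l\<bar> powr p \<le> (\<Sum>l\<in>{..<n}. \<bar>y l\<bar> powr p)"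
    by (rule member_le_sum) (use assms(2) in auto)
  ultimately show False using assms(1) by simp
qed

lemma sphere_iff:
  assumes "0 < p"
  shows "pnorm p n y = 1 \<longleftrightarrow> (\<Sum>l<n. \<bar>y l\<bar> powr p) = 1"
proof
  assume h: "pnorm p n y = 1"
  have "(\<Sum>l<n. \<bar>y l\<bar> powr p) = (pnorm p n y) powr p"
    unfolding pnorm_def using assms by (simp add: powr_powr sum_nonneg)
  thus "(\<Sum>l<n. \<bar>y l\<bar> powr p) = 1" using h by simp
qed (simp add: pnorm_def)

lemma power_mean:
  assumes "1 < p" "(\<Sum>l<n. \<bar>y l\<bar> powr p) = 1" "1 \<le> n"
  shows "(\<Sum>l<n. \<bar>y l\<bar>) \<le> real n powr (1 / conj_exp p)"
proof -
  define q where "q = conj_exp p"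
  have q: "1 < q" "1/p + 1/q = 1" using conj_exp_facts[OF assms(1)] by (auto simp: q_def)
  define b where "b = real n powr (- (1 / q))"
  have bpos: "0 < b" using assms(3) by (simp add: b_def)
  have bq: "b powr q = 1 / real n" using assms(3) q
    by (simp add: b_def powr_powr)
  have "b * (\<Sum>l<n. \<bar>y l\<bar>) = (\<Sum>l<n. \<bar>y l\<bar> * b)" by (simp add: sum_distrib_left mult.commute)
  also have "\<dots> \<le> (\<Sum>l<n. \<bar>y l\<bar> powr p / p + b powr q / q)"
    using assms(1) q bpos by (intro sum_mono Youngs_inequality) auto
  also have "\<dots> = (\<Sum>l<n. \<bar>y l\<bar> powr p) / p + real n * (b powr q) / q"
    by (simp add: sum.distrib sum_divide_distrib)
  also have "\<dots> = 1" using assms(2,3) q bq by simp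
  finally have "(\<Sum>l<n. \<bar>y l\<bar>) \<le> 1 / b" using bpos by (simp add: field_simps)
  also have "1 / b = real n powr (1 / q)" using assms(3)
    by (simp add: b_def powr_minus divide_inverse)
  finally show ?thesis by (simp add: q_def)
qed

lemma crit_bound:
  assumes "i < m" "1 \<le> d i" "\<forall>k<m. 1 < p k"
    and rows: "\<forall>k<m. (\<Sum>l<d k. \<bar>x k l\<bar> powr p k) = 1"
  shows "\<bar>mlf m d f x\<bar> \<le> Max ((\<lambda>l. real (d i) powr (1 / conj_exp (p i))
                 * pder m d (\<lambda>j. \<bar>f j\<bar>) i l (\<lambda>_ _. 1)) ` {..<d i})"
    (is "_ \<le> Max (?g ` _)")
proof -
  define M where "M = Max (?g ` {..<d i})"
  define D where "D = real (d i) powr (1 / conj_exp (p i))"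
  have Dpos: "0 < D" using assms(2) by (simp add: D_def)
  have gle: "?g l \<le> M" if "l < d i" for l
    unfolding M_def using that by (intro Max_ge) auto
  let ?c = "\<lambda>k. coef m d (\<lambda>j. \<bar>f j\<bar>) (\<lambda>_ _. 1) i k"
  have cle: "?c k \<le> M / D" if "k < d i" for k
    using gle[OF that] pder_coef[of i m k d "\<lambda>j. \<bar>f j\<bar>" "\<lambda>_ _. 1", OF assms(1) that] Dpos by (simp add: D_def pos_le_divide_eq mult.commute)
  have "\<bar>mlf m d f x\<bar> \<le> (\<Sum>j\<in>tidx m d. \<bar>f j\<bar> * (\<Prod>i'<m. \<bar>x i' (j i')\<bar>))"
    unfolding mlf_def by (rule order.trans[OF sum_abs]) (simp add: abs_mult abs_prod)
  also have "\<dots> \<le> (\<Sum>j\<in>tidx m d. \<bar>f j\<bar> * (\<Prod>i'<m. ((\<lambda>_ _. 1)(i := \<lambda>k. \<bar>x i k\<bar>)) i' (j i')))"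
  proof (intro sum_mono mult_left_mono)
    fix j assume j: "j \<in> tidx m d"
    have "(\<Prod>i'<m. \<bar>x i' (j i')\<bar>) = \<bar>x i (j i)\<bar> * (\<Prod>i'\<in>{..<m}-{i}. \<bar>x i' (j i')\<bar>)"
      using assms(1) by (subst prod.remove[of _ i]) auto
    also have "\<dots> \<le> \<bar>x i (j i)\<bar> * 1"
    proof (intro mult_left_mono prod_le_1)
      fix i' assume "i' \<in> {..<m}-{i}"
      hence "i' < m" "j i' < d i'" using j by (auto simp: tidx_def)
      thus "0 \<le> \<bar>x i' (j i')\<bar> \<and> \<bar>x i' (j i')\<bar> \<le> 1"
        using row_le1[where n="d i'" and y="x i'" and p="p i'" and l="j i'"] rows assms(3) by auto
    qed auto
    also have "\<dots> = (\<Prod>i'<m. ((\<lambda>_ _. 1)(i := \<lambda>k. \<bar>x i k\<bar>)) i' (j i'))"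
      using assms(1) by (subst prod.remove[of _ i]) auto
    finally show "(\<Prod>i'<m. \<bar>x i' (j i')\<bar>) \<le> (\<Prod>i'<m. ((\<lambda>_ _. 1)(i := \<lambda>k. \<bar>x i k\<bar>)) i' (j i'))" .
  qed auto
  also have "\<dots> = mlf m d (\<lambda>j. \<bar>f j\<bar>) ((\<lambda>_ _. 1)(i := \<lambda>k. \<bar>x i k\<bar>))"
    by (simp add: mlf_def)
  also have "\<dots> = (\<Sum>k<d i. \<bar>x i k\<bar> * ?c k)" by (rule mlf_upd[OF assms(1)])
  also have "\<dots> \<le> (\<Sum>k<d i. \<bar>x i k\<bar> * (M / D))"
    by (intro sum_mono mult_left_mono cle) auto
  also have "\<dots> = (M / D) * (\<Sum>k<d i. \<bar>x i k\<bar>)" by (simp only: sum_distrib_left mult.commute)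
  also have "\<dots> \<le> (M / D) * D"
  proof (rule mult_left_mono)
    show "(\<Sum>k<d i. \<bar>x i k\<bar>) \<le> D" unfolding D_def
      using power_mean[where p="p i" and n="d i" and y="x i"] assms rows by auto
    have "0 \<le> ?c 0" unfolding coef_def by (intro sum_nonneg mult_nonneg_nonneg) auto
    hence "0 \<le> M / D" using cle[of 0] assms(2) by linarith
    thus "0 \<le> M / D" .
  qed
  also have "\<dots> = M" using Dpos by simp
  finally show ?thesis unfolding M_def .
qed




lemma crit_val_abs:
  assumes "i < m" "1 < p i" "(\<Sum>l<d i. \<bar>x i l\<bar> powr p i) = 1"
    and eq: "\<forall>l<d i. sigma m d p f i x l = psi (conj_exp (p i)) lam * x i l"
  shows "lam = \<bar>mlf m d f x\<bar>"
proof -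
  define q where "q = conj_exp (p i)"
  define F where "F = mlf m d f x"
  have pq: "(p i - 1) * (q - 1) = 1" "(q - 1) * (p i - 1) = 1"
    using conj_exp_facts[OF assms(2)] by (auto simp: q_def mult.commute)
  have key: "sgn F * coef m d f x i l = lam * psi (p i) (x i l)" if l: "l < d i" for l
  proof -
    have "sgn F * psi q (coef m d f x i l) = psi q lam * x i l"
      using eq[rule_format, OF l] pder_coef[where f=f and x=x and d=d and m=m and i=i, OF assms(1) l] by (simp add: Defs.sigma_def F_def q_def)
    hence "psi (p i) (sgn F * psi q (coef m d f x i l)) = psi (p i) (psi q lam * x i l)" by simp
    thus ?thesis by (simp add: psi_mult psi_sgn psi_inv[OF pq(2)])
  qed
  have "lam = lam * (\<Sum>l<d i. \<bar>x i l\<bar> powr p i)" using assms(3) by simp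
  also have "\<dots> = (\<Sum>l<d i. x i l * (lam * psi (p i) (x i l)))"
    unfolding sum_distrib_left
    by (intro sum.cong refl) (use assms(2) mult_psi[of "p i"] in auto)
  also have "\<dots> = (\<Sum>l<d i. x i l * (sgn F * coef m d f x i l))"
    using key by simp
  also have "\<dots> = sgn F * F"
    unfolding F_def mlf_self[OF assms(1), of d f x] sum_distrib_left
    by (intro sum.cong refl) simp
  also have "\<dots> = \<bar>F\<bar>" by (simp add: sgn_if)
  finally show ?thesis by (simp add: F_def)
qed




lemma abs_powr_eq: "0 < P \<Longrightarrow> \<bar>u::real\<bar> powr P = (u^2) powr (P/2)"
proof (cases "u = 0")
  case False
  have e: "\<bar>u\<bar> powr 2 = u^2" using False by (simp add: powr_numeral)
  have "(\<bar>u\<bar> powr 2) powr (P/2) = \<bar>u\<bar> powr P" by (simp only: powr_powr) simp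
  thus ?thesis unfolding e by simp
qed simp

lemma abs_powr_deriv:
  assumes "1 < P"
  shows "((\<lambda>u::real. \<bar>u\<bar> powr P) has_real_derivative P * \<bar>c\<bar> powr (P - 1) * sgn c) (at c)"
proof (cases "c = 0")
  case True
  have lim: "((\<lambda>h::real. \<bar>h\<bar> powr (P - 1)) \<longlongrightarrow> 0) (at 0)"
  proof -
    have "continuous_on UNIV (\<lambda>h::real. \<bar>h\<bar> powr (P - 1))"
      using assms by (intro continuous_on_powr' continuous_intros) auto
    hence "isCont (\<lambda>h::real. \<bar>h\<bar> powr (P - 1)) 0" by (simp add: continuous_on_eq_continuous_at)
    hence "((\<lambda>h::real. \<bar>h\<bar> powr (P - 1)) \<longlongrightarrow> \<bar>0\<bar> powr (P - 1)) (at 0)"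
      by (simp add: isCont_def)
    thus ?thesis by simp
  qed
  have "((\<lambda>h::real. (\<bar>0 + h\<bar> powr P - \<bar>0\<bar> powr P) / h) \<longlongrightarrow> 0) (at 0)"
  proof (rule Lim_null_comparison[OF _ lim])
    show "\<forall>\<^sub>F h in at 0. norm ((\<bar>0 + h\<bar> powr P - \<bar>0::real\<bar> powr P) / h) \<le> \<bar>h\<bar> powr (P - 1)"
    proof (rule always_eventually, rule allI)
      fix h :: real
      show "norm ((\<bar>0 + h\<bar> powr P - \<bar>0::real\<bar> powr P) / h) \<le> \<bar>h\<bar> powr (P - 1)"
      proof (cases "h = 0")
        case False
        have "norm ((\<bar>0 + h\<bar> powr P - \<bar>0::real\<bar> powr P) / h) = \<bar>h\<bar> powr P / \<bar>h\<bar>"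
          using assms by simp
        also have "\<dots> = \<bar>h\<bar> powr (P - 1)" using False by (simp add: powr_diff)
        finally show ?thesis by simp
      qed simp
    qed
  qed
  thus ?thesis using True by (simp add: DERIV_def)
next
  case False
  have "((\<lambda>u::real. (u^2) powr (P/2)) has_real_derivative
          (c^2) powr (P/2) * (0 * ln (c^2) + (2 * c) * (P/2) / c^2)) (at c)"
    using False by (intro DERIV_powr derivative_eq_intros) auto
  moreover have "(c^2) powr (P/2) * (0 * ln (c^2) + (2 * c) * (P/2) / c^2) = P * \<bar>c\<bar> powr (P - 1) * sgn c"
  proof -
    have "(c^2) powr (P/2) = \<bar>c\<bar> powr P" using abs_powr_eq[of P c] assms by simp
    moreover have "\<bar>c\<bar> powr P = \<bar>c\<bar> powr (P - 1) * \<bar>c\<bar>" using False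
      by (simp add: powr_diff)
    ultimately show ?thesis using False
      by (simp add: sgn_if power2_eq_square field_simps)
  qed
  moreover have "(\<lambda>u::real. (u^2) powr (P/2)) = (\<lambda>u. \<bar>u\<bar> powr P)"
    using abs_powr_eq assms by auto
  ultimately show ?thesis by simp
qed




definition Kset :: "nat \<Rightarrow> (nat \<Rightarrow> nat) \<Rightarrow> (nat \<Rightarrow> nat \<Rightarrow> real) set" where
  "Kset m d = {x. \<forall>i l. x i l \<in> (if i < m \<and> l < d i then {-1..1} else {0})}"

definition Sset :: "nat \<Rightarrow> (nat \<Rightarrow> nat) \<Rightarrow> (nat \<Rightarrow> real) \<Rightarrow> (nat \<Rightarrow> nat \<Rightarrow> real) set" where
  "Sset m d p = Kset m d \<inter> (\<Inter>k\<in>{..<m}. {x. (\<Sum>l<d k. \<bar>x k l\<bar> powr p k) = 1})"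

lemma compact_Kset: "compact (Kset m d)"
proof -
  define C where "C = (\<lambda>i l. if i < m \<and> l < d i then {-1..1::real} else {0})"
  have inner: "compact (PiE UNIV (C i))" for i
  proof -
    have "compactin (product_topology (\<lambda>_. euclidean) UNIV) (PiE UNIV (C i))"
      unfolding compactin_PiE by (auto simp: C_def compactin_euclidean_iff)
    thus ?thesis by (simp add: euclidean_product_topology compactin_euclidean_iff)
  qed
  have "compactin (product_topology (\<lambda>_. euclidean) UNIV) (PiE UNIV (\<lambda>i. PiE UNIV (C i)))"
    unfolding compactin_PiE using inner by (auto simp: compactin_euclidean_iff)
  hence "compact (PiE UNIV (\<lambda>i. PiE UNIV (C i)))"
    by (simp add: euclidean_product_topology compactin_euclidean_iff)
  moreover have "PiE UNIV (\<lambda>i. PiE UNIV (C i)) = Kset m d"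
    unfolding Kset_def C_def PiE_iff
    by (auto simp: PiE_iff) (smt (verit) atLeastAtMost_iff singletonD)+
  ultimately show ?thesis by simp
qed

lemma cont_coord: "continuous_on S (\<lambda>x::nat \<Rightarrow> nat \<Rightarrow> real. x k l)"
  proof -
  have "continuous_on S (\<lambda>x::nat \<Rightarrow> nat \<Rightarrow> real. x k)"
    by (rule continuous_on_product_then_coordinatewise[OF continuous_on_id])
  thus ?thesis by (rule continuous_on_product_then_coordinatewise)
qed

lemma compact_Sset:
  assumes "\<forall>k<m. 0 < p k"
  shows "compact (Sset m d p)"
  unfolding Sset_def
proof (intro compact_Int_closed compact_Kset closed_INT ballI closed_Collect_eq)
  fix k assume "k \<in> {..<m}"
  thus "continuous_on UNIV (\<lambda>x::nat \<Rightarrow> nat \<Rightarrow> real. \<Sum>l<d k. \<bar>x k l\<bar> powr p k)"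
    using assms by (intro continuous_on_sum continuous_on_powr' continuous_on_rabs cont_coord continuous_on_const) auto
qed auto

lemma cont_mlf: "continuous_on S (mlf m d f)"
  unfolding mlf_def[abs_def] by (intro continuous_on_sum continuous_on_mult continuous_on_prod continuous_on_const cont_coord)




lemma stationary:
  assumes i: "i < m" and l: "l < d i" and pk: "\<forall>k<m. 1 < p k"
    and xS: "x \<in> Sset m d p" and mx: "\<forall>y\<in>Sset m d p. mlf m d f y \<le> mlf m d f x"
  shows "coef m d f x i l = mlf m d f x * psi (p i) (x i l)"
proof -
  define P where "P = p i"
  have P: "1 < P" using pk i by (simp add: P_def)
  define a where "a = x i l"
  define g where "g = coef m d f x i l"
  define F where "F = mlf m d f x"
  define v where "v t = (x i)(l := a + t)" for t
  define St where "St t = (\<Sum>k<d i. \<bar>v t k\<bar> powr P)" for t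
  define N where "N t = St t powr (1/P)" for t
  have xK: "\<forall>i l. x i l \<in> (if i < m \<and> l < d i then {-1..1} else {0})"
    using xS by (simp add: Sset_def Kset_def)
  have rows: "\<forall>k<m. (\<Sum>l<d k. \<bar>x k l\<bar> powr p k) = 1"
    using xS by (simp add: Sset_def)
  define R where "R = (\<Sum>k\<in>{..<d i}-{l}. \<bar>x i k\<bar> powr P)"
  have one: "1 = \<bar>a\<bar> powr P + R"
  proof -
    have "1 = (\<Sum>k<d i. \<bar>x i k\<bar> powr P)" using rows i by (simp add: P_def)
    also have "\<dots> = \<bar>a\<bar> powr P + R" unfolding R_def a_def
      using l by (subst sum.remove[of _ l]) auto
    finally show ?thesis .
  qed
  have St_eq: "St t = 1 - \<bar>a\<bar> powr P + \<bar>a + t\<bar> powr P" for t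
  proof -
    have "St t = \<bar>v t l\<bar> powr P + (\<Sum>k\<in>{..<d i}-{l}. \<bar>v t k\<bar> powr P)"
      unfolding St_def using l by (subst sum.remove[of _ l]) auto
    also have "(\<Sum>k\<in>{..<d i}-{l}. \<bar>v t k\<bar> powr P) = R"
      unfolding R_def v_def by (intro sum.cong) auto
    finally show ?thesis using one by (simp add: v_def)
  qed
  have Fsum: "F = (\<Sum>k<d i. x i k * coef m d f x i k)"
    unfolding F_def by (rule mlf_self[OF i])
  have mlf_v: "mlf m d f (x(i := v t)) = F + t * g" for t
  proof -
    have "mlf m d f (x(i := v t)) = (\<Sum>k<d i. v t k * coef m d f x i k)"
      by (rule mlf_upd[OF i])
    also have "\<dots> = v t l * g + (\<Sum>k\<in>{..<d i}-{l}. v t k * coef m d f x i k)"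
      unfolding g_def using l by (subst sum.remove[of _ l]) auto
    also have "(\<Sum>k\<in>{..<d i}-{l}. v t k * coef m d f x i k) = (\<Sum>k\<in>{..<d i}-{l}. x i k * coef m d f x i k)"
      unfolding v_def by (intro sum.cong) auto
    also have "F = a * g + (\<Sum>k\<in>{..<d i}-{l}. x i k * coef m d f x i k)"
      unfolding Fsum g_def a_def using l by (subst sum.remove[of _ l]) auto
    moreover have "v t l * g = a * g + t * g" by (simp add: v_def algebra_simps)
    ultimately show ?thesis by linarith
  qed
  have ineq: "F + t * g \<le> F * N t" for t
  proof (cases "St t = 0")
    case True
    have "\<forall>k\<in>{..<d i}. \<bar>v t k\<bar> powr P = 0"
      using True unfolding St_def by (subst sum_nonneg_eq_0_iff[symmetric]) auto
    hence "\<forall>k<d i. v t k = 0" by simp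
    hence "mlf m d f (x(i := v t)) = 0" by (simp add: mlf_upd[OF i])
    moreover have "N t = 0" using True by (simp add: N_def)
    ultimately show ?thesis using mlf_v by simp
  next
    case False
    have St_pos: "0 < St t" using False unfolding St_def
      by (metis (no_types, lifting) abs_ge_zero less_eq_real_def powr_ge_zero sum_nonneg)
    hence Npos: "0 < N t" by (simp add: N_def)
    have Npow: "N t powr P = St t" using St_pos P by (simp add: N_def powr_powr)
    define z where "z = x(i := (\<lambda>k. v t k / N t))"
    have zrow: "(\<Sum>k<d i. \<bar>z i k\<bar> powr P) = 1"
    proof -
      have "(\<Sum>k<d i. \<bar>z i k\<bar> powr P) = (\<Sum>k<d i. \<bar>v t k\<bar> powr P / N t powr P)"
        unfolding z_def using Npos by (intro sum.cong) (auto simp: abs_divide powr_divide)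
      also have "\<dots> = (\<Sum>k<d i. \<bar>v t k\<bar> powr P) / N t powr P"
        by (rule sum_divide_distrib[symmetric])
      also have "\<dots> = St t / St t" by (simp only: Npow St_def)
      finally show ?thesis using St_pos by simp
    qed
    have zK: "z \<in> Kset m d"
      unfolding Kset_def
    proof (intro CollectI allI)
      fix i' l'
      show "z i' l' \<in> (if i' < m \<and> l' < d i' then {-1..1} else {0})"
      proof (cases "i' = i")
        case False thus ?thesis using xK by (simp add: z_def)
      next
        case True
        show ?thesis
        proof (cases "l' < d i")
          case True
          have "\<bar>z i l'\<bar> \<le> 1"
            using row_le1[where n="d i" and y="z i" and p=P and l=l'] zrow True P by auto
          thus ?thesis using True \<open>i' = i\<close> i by auto
        next
          case False
          hence "x i l' = 0" using xK by (meson singletonD)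
          thus ?thesis using False \<open>i' = i\<close> l by (auto simp: z_def v_def)
        qed
      qed
    qed
    have zR: "(\<Sum>l<d k. \<bar>z k l\<bar> powr p k) = 1" if "k < m" for k
      using rows zrow that by (cases "k = i") (auto simp: z_def P_def)
    have zS: "z \<in> Sset m d p" using zK zR by (simp add: Sset_def)
    have "mlf m d f z = (\<Sum>k<d i. (v t k / N t) * coef m d f x i k)"
      unfolding z_def by (rule mlf_upd[OF i])
    also have "\<dots> = mlf m d f (x(i := v t)) / N t"
      by (simp add: mlf_upd[OF i] sum_divide_distrib)
    finally have "(F + t * g) / N t \<le> F" using mx zS mlf_v F_def by auto
    thus ?thesis using Npos by (simp add: pos_divide_le_eq mult.commute)
  qed
  define Dv where "Dv = P * \<bar>a\<bar> powr (P - 1) * sgn a"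
  have d1: "((\<lambda>u. \<bar>u\<bar> powr P) has_real_derivative Dv) (at (a + 0))"
    using abs_powr_deriv[OF P, of a] by (simp add: Dv_def)
  have d2: "((\<lambda>t. \<bar>a + t\<bar> powr P) has_real_derivative Dv * 1) (at 0)"
    by (rule DERIV_chain2[where g="\<lambda>t. a + t" and x=0, OF d1]) (auto intro!: derivative_eq_intros)
  have St_fun: "St = (\<lambda>t. 1 - \<bar>a\<bar> powr P + \<bar>a + t\<bar> powr P)" using St_eq by auto
  have dS: "(St has_real_derivative Dv) (at 0)"
    unfolding St_fun using DERIV_add[OF DERIV_const d2, of "1 - \<bar>a\<bar> powr P"] by simp
  have St0: "St 0 = 1" using St_eq by simp
  have dN: "(N has_real_derivative St 0 powr (1/P) * (0 * ln (St 0) + Dv * (1/P) / St 0)) (at 0)"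
    unfolding N_def[abs_def] by (rule DERIV_powr[OF dS]) (auto simp: St0)
  hence dN': "(N has_real_derivative Dv / P) (at 0)" by (simp add: St0)
  define h where "h t = F * N t - (F + t * g)" for t
  have dh: "(h has_real_derivative F * (Dv / P) - (0 + 1 * g)) (at 0)"
  proof -
    have dlin: "((\<lambda>t. F + t * g) has_real_derivative 0 + 1 * g) (at 0)"
      by (auto intro!: derivative_eq_intros)
    show ?thesis unfolding h_def[abs_def] by (rule DERIV_diff[OF DERIV_cmult[OF dN'] dlin])
  qed
  have h0: "h 0 = 0" by (simp add: h_def N_def St0)
  have "F * (Dv / P) - (0 + 1 * g) = 0"
  proof (rule DERIV_local_min[OF dh, of 1])
    show "\<forall>y. \<bar>0 - y\<bar> < 1 \<longrightarrow> h 0 \<le> h y"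
    proof (intro allI impI)
      fix y show "h 0 \<le> h y" using ineq[of y] h0 unfolding h_def by linarith
    qed
  qed simp
  moreover have "Dv / P = psi P a" using P by (simp add: Dv_def psi_def)
  ultimately have "g = F * psi P a" by simp
  thus ?thesis by (simp add: g_def F_def a_def P_def)
qed




theorem proposition1:
  fixes m :: nat and d :: "nat \<Rightarrow> nat" and p :: "nat \<Rightarrow> real"
    and f :: "(nat \<Rightarrow> nat) \<Rightarrow> real"
  assumes "m \<ge> 1"
    and "\<forall>i<m. d i \<ge> 1"
    and "\<forall>i<m. 1 < p i"
    and "\<exists>j\<in>tidx m d. f j \<noteq> 0"
  shows "crit_vals m d p f \<noteq> {} \<and>
    (\<forall>lam\<in>crit_vals m d p f. 0 < lam \<and>
       lam \<le> Min ((\<lambda>i. Max ((\<lambda>l. real (d i) powr (1 / conj_exp (p i))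
                 * pder m d (\<lambda>j. \<bar>f j\<bar>) i l (\<lambda>_ _. 1)) ` {..<d i})) ` {..<m}))"
proof
  have m0: "0 < m" using assms(1) by simp
  have ppos: "\<forall>k<m. 0 < p k" using assms(3) by force
  obtain j0 where j0: "j0 \<in> tidx m d" "f j0 \<noteq> 0" using assms(4) by blast
  have j0d: "j0 k < d k" if "k < m" for k using j0(1) that by (auto simp: tidx_def)
  define s where "s = sgn (f j0)"
  have s: "\<bar>s\<bar> = 1" using j0(2) by (simp add: s_def sgn_if)
  define u where "u = (\<lambda>i l. if i < m \<and> l < d i \<and> l = j0 i then (if i = 0 then s else 1) else (0::real))"
  have uK: "u \<in> Kset m d" using s by (auto simp: Kset_def u_def abs_le_iff)
  have uR: "(\<Sum>l<d k. \<bar>u k l\<bar> powr p k) = 1" if k: "k < m" for k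
  proof -
    have "(\<Sum>l<d k. \<bar>u k l\<bar> powr p k) = (\<Sum>l<d k. if l = j0 k then 1 else 0)"
      using k s ppos by (intro sum.cong) (auto simp: u_def)
    also have "\<dots> = 1" using j0d[OF k] by simp
    finally show ?thesis .
  qed
  have uS: "u \<in> Sset m d p" using uK uR by (simp add: Sset_def)
  have mlf_u: "mlf m d f u = \<bar>f j0\<bar>"
  proof -
    have z: "f j * (\<Prod>i<m. u i (j i)) = 0" if j: "j \<in> tidx m d - {j0}" for j
    proof -
      have "\<exists>i<m. j i \<noteq> j0 i"
      proof (rule ccontr)
        assume "\<not> ?thesis"
        hence "j = j0" using j j0(1) unfolding tidx_def
          by (metis DiffD1 PiE_ext lessThan_iff)
        thus False using j by simp
      qed
      then obtain i where "i < m" "j i \<noteq> j0 i" by blast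
      hence "u i (j i) = 0" by (simp add: u_def)
      thus ?thesis using \<open>i < m\<close> by (simp add: prod_zero_iff) (metis lessThan_iff)
    qed
    have "mlf m d f u = f j0 * (\<Prod>i<m. u i (j0 i)) + (\<Sum>j\<in>tidx m d - {j0}. f j * (\<Prod>i<m. u i (j i)))"
      unfolding mlf_def using j0(1) by (subst sum.remove[of _ j0]) (auto simp: finite_tidx)
    also have "(\<Sum>j\<in>tidx m d - {j0}. f j * (\<Prod>i<m. u i (j i))) = 0"
      using z by (intro sum.neutral) auto
    also have "(\<Prod>i<m. u i (j0 i)) = (\<Prod>i<m. if i = 0 then s else 1)"
      using j0d by (intro prod.cong) (auto simp: u_def)
    also have "\<dots> = s" using m0 by (simp add: prod.delta)
    finally show ?thesis by (simp add: s_def sgn_if)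
  qed
  obtain x where xS: "x \<in> Sset m d p" and mx: "\<forall>y\<in>Sset m d p. mlf m d f y \<le> mlf m d f x"
    using continuous_attains_sup[OF compact_Sset[OF ppos] _ cont_mlf] uS by blast
  define F where "F = mlf m d f x"
  have Fpos: "0 < F" using mx uS mlf_u j0(2) by (force simp: F_def)
  have rows: "\<forall>k<m. (\<Sum>l<d k. \<bar>x k l\<bar> powr p k) = 1" using xS by (simp add: Sset_def)
  have sph: "x \<in> sphere_set m d p"
    using rows ppos sphere_iff by (simp add: sphere_set_def)
  have crit: "sigma m d p f i x l = psi (conj_exp (p i)) F * x i l" if "i < m" "l < d i" for i l
  proof -
    have pq: "(p i - 1) * (conj_exp (p i) - 1) = 1" using conj_exp_facts assms(3) that by blast
    have "sigma m d p f i x l = psi (conj_exp (p i)) (coef m d f x i l)"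
      using Fpos pder_coef[where f=f and x=x and d=d and m=m and i=i, OF that]
      by (simp add: Defs.sigma_def F_def)
    also have "\<dots> = psi (conj_exp (p i)) (F * psi (p i) (x i l))"
      using stationary[OF that assms(3) xS mx] by (simp add: F_def)
    also have "\<dots> = psi (conj_exp (p i)) F * x i l" by (simp add: psi_mult psi_inv[OF pq])
    finally show ?thesis .
  qed
  have "F \<in> crit_vals m d p f" unfolding crit_vals_def using Fpos sph crit by auto
  thus "crit_vals m d p f \<noteq> {}" by blast
next
  show "\<forall>lam\<in>crit_vals m d p f. 0 < lam \<and>
       lam \<le> Min ((\<lambda>i. Max ((\<lambda>l. real (d i) powr (1 / conj_exp (p i))
                 * pder m d (\<lambda>j. \<bar>f j\<bar>) i l (\<lambda>_ _. 1)) ` {..<d i})) ` {..<m})"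
  proof
    fix lam assume "lam \<in> crit_vals m d p f"
    then obtain x where lam0: "lam \<noteq> 0" and sph: "x \<in> sphere_set m d p"
      and eq: "\<forall>i<m. \<forall>l<d i. sigma m d p f i x l = psi (conj_exp (p i)) lam * x i l"
      unfolding crit_vals_def by blast
    have ppos: "\<forall>k<m. 0 < p k" using assms(3) by force
    have rows: "\<forall>k<m. (\<Sum>l<d k. \<bar>x k l\<bar> powr p k) = 1"
      using sph ppos sphere_iff by (simp add: sphere_set_def)
    have m0: "0 < m" using assms(1) by simp
    have lamF: "lam = \<bar>mlf m d f x\<bar>"
      by (rule crit_val_abs[OF m0]) (use assms(3) rows eq m0 in auto)
    show "0 < lam \<and> lam \<le> Min ((\<lambda>i. Max ((\<lambda>l. real (d i) powr (1 / conj_exp (p i))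
                 * pder m d (\<lambda>j. \<bar>f j\<bar>) i l (\<lambda>_ _. 1)) ` {..<d i})) ` {..<m})"
    proof
      show "0 < lam" using lamF lam0 by simp
      show "lam \<le> Min ((\<lambda>i. Max ((\<lambda>l. real (d i) powr (1 / conj_exp (p i))
                 * pder m d (\<lambda>j. \<bar>f j\<bar>) i l (\<lambda>_ _. 1)) ` {..<d i})) ` {..<m})"
        using m0 lamF crit_bound[OF _ _ assms(3) rows] assms(2)
        by (intro Min.boundedI) auto
    qed
  qed
qed


end
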